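(* Let $0<m<M$ and let $A,B\in\mathbb{P}_n^+$ satisfy $mI\le A\le MI$ and $mI\le B\le MI$. If $f:[0,\infty)\to[0,\infty)$ is a differentiable convex function with $f(0)=0$, then (i) $(\det f(A))^{1/n}+(\det f(B))^{1/n}\le \frac{f(M)}{M}(\det(A+B))^{1/n}$; (ii) $\frac{f(m)}{m}\big((\det A)^{1/n}+(\det B)^{1/n}\big)\le (\det(f(A)+f(B)))^{1/n}$. If $f:[0,\infty)\to[0,\infty)$ is a differentiable concave function with $f(0)=0$, then (iii) $(\det f(A))^{1/n}+(\det f(B))^{1/n}\le \frac{f(m)}{m}(\det(A+B))^{1/n}$; (iv) $\frac{f(M)}{M}\big((\det A)^{1/n}+(\det B)^{1/n}\big)\le (\det(f(A)+f(B)))^{1/n}$.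
   Context: $\mathbb{P}_n^+$ denotes the set of $n\times n$ complex positive definite matrices, $I$ is the identity matrix, $\le$ is the Löwner order, and $f(A)$ is defined by functional calculus. *)

theory Defs
  imports "HOL-Analysis.Analysis"
begin

text \<open>Complex n x n matrices are represented as complex^'n^'n; n = CARD('n).\<close>

definition cadj :: "complex^'n^'n \<Rightarrow> complex^'n^'n" where
  "cadj A = (\<chi> i j. cnj (A $ j $ i))"

definition hermitian_mat :: "complex^'n^'n \<Rightarrow> bool" where
  "hermitian_mat A \<longleftrightarrow> cadj A = A"

definition unitary_mat :: "complex^'n^'n \<Rightarrow> bool" where
  "unitary_mat U \<longleftrightarrow> U ** cadj U = mat 1 \<and> cadj U ** U = mat 1"

definition diag_mat :: "('n \<Rightarrow> complex) \<Rightarrow> complex^'n^'n" where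
  "diag_mat d = (\<chi> i j. if i = j then d i else 0)"

definition qform :: "complex^'n^'n \<Rightarrow> complex^'n \<Rightarrow> complex" where
  "qform A x = (\<Sum>i\<in>UNIV. cnj (x $ i) * (A *v x) $ i)"

definition psd_mat :: "complex^'n^'n \<Rightarrow> bool" where
  "psd_mat A \<longleftrightarrow> hermitian_mat A \<and> (\<forall>x. 0 \<le> Re (qform A x))"

definition pd_mat :: "complex^'n^'n \<Rightarrow> bool" where
  "pd_mat A \<longleftrightarrow> hermitian_mat A \<and> (\<forall>x. x \<noteq> 0 \<longrightarrow> 0 < Re (qform A x))"

definition loewner_le :: "complex^'n^'n \<Rightarrow> complex^'n^'n \<Rightarrow> bool" where
  "loewner_le A B \<longleftrightarrow> psd_mat (B - A)"

text \<open>Functional calculus for Hermitian matrices: if A = U diag(\<lambda>) U^* with U unitary and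
  \<lambda> real, then f(A) = U diag(f(\<lambda>)) U^* (independent of the chosen diagonalization).\<close>
definition mat_fun :: "(real \<Rightarrow> real) \<Rightarrow> complex^'n^'n \<Rightarrow> complex^'n^'n" where
  "mat_fun f A = (let (U, d) = (SOME (U, d). unitary_mat U \<and> (\<forall>i. d i \<in> \<real>) \<and>
                                   A = U ** diag_mat d ** cadj U)
                  in U ** diag_mat (\<lambda>i. complex_of_real (f (Re (d i)))) ** cadj U)"

text \<open>(det X)^{1/n}, for matrices with nonnegative real determinant.\<close>
definition det_root :: "complex^'n^'n \<Rightarrow> real" where
  "det_root X = Re (det X) powr (1 / real CARD('n))"

end

theory Submission
  imports Defs
begin


definition hip :: "complex^'n \<Rightarrow> complex^'n \<Rightarrow> complex" where
  "hip x y = (\<Sum>i\<in>UNIV. cnj (x $ i) * y $ i)"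

lemma qform_hip: "qform A x = hip x (A *v x)"
  by (simp add: qform_def hip_def)

lemma hip_add_right: "hip x (y + z) = hip x y + hip x z"
  by (simp add: hip_def distrib_left sum.distrib)
lemma hip_add_left: "hip (x + y) z = hip x z + hip y z"
  by (simp add: hip_def distrib_right sum.distrib)
lemma hip_diff_right: "hip x (y - z) = hip x y - hip x z"
  by (simp add: hip_def right_diff_distrib sum_subtractf)
lemma hip_diff_left: "hip (x - y) z = hip x z - hip y z"
  by (simp add: hip_def left_diff_distrib sum_subtractf)
lemma hip_smult_right: "hip x (c *s y) = c * hip x y"
  by (simp add: hip_def sum_distrib_left algebra_simps)
lemma hip_smult_left: "hip (c *s x) y = cnj c * hip x y"
  by (simp add: hip_def sum_distrib_left algebra_simps)
lemma hip_zero_left[simp]: "hip 0 y = 0" by (simp add: hip_def)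
lemma hip_zero_right[simp]: "hip x 0 = 0" by (simp add: hip_def)
lemma hip_cnj: "cnj (hip x y) = hip y x"
  by (simp add: hip_def mult.commute)
lemma hip_self: "hip x x = of_real (norm x ^ 2)"
proof -
  have c: "cnj (x$i) * x$i = of_real (norm (x$i) ^ 2)" for i
    by (subst complex_norm_square) (rule mult.commute)
  have "norm x ^ 2 = (\<Sum>i\<in>UNIV. norm (x$i) ^ 2)"
    by (simp add: norm_vec_def L2_set_def sum_nonneg)
  then show ?thesis
    unfolding hip_def c by (simp only: of_real_sum)
qed
lemma hip_self_eq0: "hip x x = 0 \<longleftrightarrow> x = 0"
  by (simp add: hip_self)
lemma inner_hip: "inner x y = Re (hip x y)"
  by (simp add: inner_vec_def hip_def Re_sum inner_complex_def)


lemma cadj_cadj[simp]: "cadj (cadj A) = A"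
  by (simp add: cadj_def vec_eq_iff)
lemma cadj_mult: "cadj (A ** B) = cadj B ** cadj A"
  by (simp add: cadj_def vec_eq_iff matrix_matrix_mult_def mult.commute)
lemma cadj_add: "cadj (A + B) = cadj A + cadj B"
  by (simp add: cadj_def vec_eq_iff)
lemma cadj_mat[simp]: "cadj (mat c) = mat (cnj c)"
  by (simp add: cadj_def vec_eq_iff mat_def)
lemma cadj_diag: "cadj (diag_mat d) = diag_mat (\<lambda>i. cnj (d i))"
  by (simp add: cadj_def vec_eq_iff diag_mat_def)

lemma hip_adj: "hip x (A *v y) = hip (cadj A *v x) y"
proof -
  have "hip x (A *v y) = (\<Sum>i\<in>UNIV. \<Sum>j\<in>UNIV. cnj (x$i) * (A$i$j * y$j))"
    unfolding hip_def matrix_vector_mult_def by (simp only: vec_lambda_beta sum_distrib_left)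
  also have "\<dots> = (\<Sum>j\<in>UNIV. \<Sum>i\<in>UNIV. cnj (x$i) * (A$i$j * y$j))"
    by (rule sum.swap)
  also have "\<dots> = hip (cadj A *v x) y"
    unfolding hip_def matrix_vector_mult_def cadj_def
    by (simp add: cnj_sum sum_distrib_right mult.assoc mult.left_commute)
  finally show ?thesis .
qed

lemma hip_herm: "hermitian_mat A \<Longrightarrow> hip x (A *v y) = hip (A *v x) y"
  using hip_adj[of x A y] by (simp add: hermitian_mat_def)

lemma hip_adj': "hip (P *v x) y = hip x (cadj P *v y)"
  using hip_adj[of x "cadj P" y] by (simp only: cadj_cadj)

lemma qform_mult: "qform A (P *v x) = qform (cadj P ** A ** P) x"
proof -
  have "qform A (P *v x) = hip x (cadj P *v (A *v (P *v x)))"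
    by (simp only: qform_hip hip_adj')
  also have "\<dots> = hip x ((cadj P ** A ** P) *v x)"
    by (simp only: matrix_vector_mul_assoc matrix_mul_assoc)
  finally show ?thesis by (simp only: qform_hip)
qed



lemma scaleR_comp: "(c *\<^sub>R y) $ i = complex_of_real c * y $ i"
  by (simp only: vector_scaleR_component) (simp add: scaleR_conv_of_real)
lemma hip_scaleR_right: "hip x (c *\<^sub>R y) = of_real c * hip x y"
  unfolding hip_def scaleR_comp by (simp add: sum_distrib_left algebra_simps)
lemma hip_scaleR_left: "hip (c *\<^sub>R x) y = of_real c * hip x y"
  unfolding hip_def scaleR_comp by (simp add: sum_distrib_left algebra_simps)

lemma continuous_hip: "continuous_on UNIV (\<lambda>x. hip v x)"
  unfolding hip_def by (intro continuous_intros)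

lemma continuous_qform: "continuous_on UNIV (\<lambda>x. qform A x)"
  unfolding qform_def matrix_vector_mult_def by (intro continuous_intros)

lemma real_quad_zero:
  fixes a b :: real
  assumes "\<And>t. 2 * t * a + t\<^sup>2 * b \<le> 0" "a \<ge> 0"
  shows "a = 0"
proof (rule ccontr)
  assume "a \<noteq> 0" then have a: "a > 0" using assms(2) by simp
  define t where "t = a / (\<bar>b\<bar> + 1)"
  have t: "t > 0" using a by (simp add: t_def add_pos_nonneg)
  have 1: "2 * t * a + t\<^sup>2 * b \<le> 0" by (rule assms(1))
  have 2: "t * (\<bar>b\<bar> + 1) = a" using t_def by simp
  have 3: "t\<^sup>2 * b \<ge> t\<^sup>2 * (- \<bar>b\<bar>)" using t by (intro mult_left_mono) auto
  have 4: "t * (2 * a - t * \<bar>b\<bar>) = 2 * t * a + t\<^sup>2 * (- \<bar>b\<bar>)" by (simp add: algebra_simps power2_eq_square)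
  have "t * (2 * a - t * \<bar>b\<bar>) \<le> 0" using 1 3 4 by linarith
  then have "2 * a - t * \<bar>b\<bar> \<le> 0" using t by (simp add: mult_le_0_iff)
  moreover have "t * \<bar>b\<bar> < a" using 2 t by (simp add: algebra_simps)
  ultimately show False using a by linarith
qed

lemma cadj_diff: "cadj (A - B) = cadj A - cadj B"
  by (simp add: cadj_def vec_eq_iff)

lemma herm_minus_mat: "hermitian_mat A \<Longrightarrow> hermitian_mat (A - mat (of_real l))"
  by (simp add: hermitian_mat_def cadj_diff)

lemma mat_mult_vec: "mat c *v x = c *s x"
proof -
  have "(\<Sum>j\<in>UNIV. (if i = j then c else 0) * x$j) = (\<Sum>j\<in>UNIV. if i = j then c * x$j else 0)" for i
    by (intro sum.cong) auto
  then show ?thesis by (simp add: vec_eq_iff matrix_vector_mult_def mat_def)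
qed

lemma mat_minus_mult: "(A - mat c) *v x = A *v x - c *s (x::complex^'n)"
  by (simp only: matrix_vector_mult_diff_rdistrib mat_mult_vec)

lemma mv_scaleR: "A *v (c *\<^sub>R x) = c *\<^sub>R (A *v (x::complex^'n))"
  by (simp add: vec_eq_iff matrix_vector_mult_def scaleR_comp scaleR_sum_right)



lemma hip_ii: "hip (\<i> *s v) x = - \<i> * hip v x"
  by (simp add: hip_smult_left)

lemma eigvec_step:
  fixes A :: "complex^'n^'n" and S :: "(complex^'n) set"
  assumes herm: "hermitian_mat A" and fin: "finite S" and card: "card S < CARD('n)"
    and inv: "\<And>v. v \<in> S \<Longrightarrow> \<exists>l::real. A *v v = of_real l *s v"
  shows "\<exists>x (l::real). norm x = 1 \<and> (\<forall>v\<in>S. hip v x = 0) \<and> A *v x = of_real l *s x"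
proof -
  define W where "W = {x. \<forall>v\<in>S. hip v x = 0}"
  have Wadd: "x + y \<in> W" if "x \<in> W" "y \<in> W" for x y
    using that by (simp add: W_def hip_add_right)
  have WR: "c *\<^sub>R x \<in> W" if "x \<in> W" for x c
    using that by (simp add: W_def hip_scaleR_right)
  have Wsub: "x - y \<in> W" if "x \<in> W" "y \<in> W" for x y
    using that by (simp add: W_def hip_diff_right)
  have Ws: "c *s x \<in> W" if "x \<in> W" for x c
    using that by (simp add: W_def hip_smult_right)
  have WA: "A *v x \<in> W" if "x \<in> W" for x
  proof -
    { fix v assume v: "v \<in> S"
      then obtain l :: real where l: "A *v v = of_real l *s v" using inv by blast
      have "hip v (A *v x) = hip (A *v v) x" using herm by (rule hip_herm)
      also have "\<dots> = 0" using l that v by (simp add: hip_smult_left W_def)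
      finally have "hip v (A *v x) = 0" . }
    then show ?thesis by (simp add: W_def)
  qed
  define T where "T = S \<union> (\<lambda>v. \<i> *s v) ` S"
  have finT: "finite T" using fin by (simp add: T_def)
  have "card T \<le> card S + card S"
    unfolding T_def by (rule order_trans[OF card_Un_le]) (simp add: card_image_le fin)
  then have "dim T < DIM(complex^'n)"
    using dim_le_card'[OF finT] card by simp
  then obtain x0 :: "complex^'n" where x0: "x0 \<noteq> 0" "\<And>y. y \<in> span T \<Longrightarrow> orthogonal x0 y"
    by (elim orthogonal_to_subspace_exists) blast
  have x0W: "x0 \<in> W"
  proof -
    { fix v assume v: "v \<in> S"
      have "v \<in> span T" "\<i> *s v \<in> span T" using v by (auto simp: T_def intro: span_base)
      then have "inner x0 v = 0" "inner x0 (\<i> *s v) = 0"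
        using x0(2) by (auto simp: orthogonal_def)
      then have "inner v x0 = 0" "inner (\<i> *s v) x0 = 0"
        by (simp_all add: inner_commute)
      then have "Re (hip v x0) = 0" "Im (hip v x0) = 0"
        by (auto simp: inner_hip hip_ii)
      then have "hip v x0 = 0" by (simp add: complex_eq_iff) }
    then show ?thesis by (simp add: W_def)
  qed
  define K where "K = W \<inter> sphere 0 1"
  have "closed W"
  proof -
    have "W = (\<Inter>v\<in>S. {x. hip v x = 0})" by (auto simp: W_def)
    moreover have "closed {x. hip v x = 0}" for v
      using continuous_hip[of v] by (intro closed_Collect_eq) (auto intro: continuous_intros)
    ultimately show ?thesis by auto
  qed
  then have "compact K" unfolding K_def by (intro closed_Int_compact) auto
  have x0n: "(1 / norm x0) *\<^sub>R x0 \<in> K"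
    using x0 x0W WR by (simp add: K_def)
  then have "K \<noteq> {}" by auto
  define \<phi> where "\<phi> x = Re (qform A x)" for x
  have "continuous_on K \<phi>"
    unfolding \<phi>_def using continuous_qform[of A]
    by (intro continuous_intros) (auto intro: continuous_on_subset)
  then obtain x1 where x1: "x1 \<in> K" "\<And>y. y \<in> K \<Longrightarrow> \<phi> y \<le> \<phi> x1"
    using continuous_attains_sup[OF \<open>compact K\<close> \<open>K \<noteq> {}\<close>] by blast
  define l where "l = \<phi> x1"
  define B where "B = A - mat (of_real l)"
  have hB: "hermitian_mat B" unfolding B_def using herm by (rule herm_minus_mat)
  have qB: "Re (qform B z) = \<phi> z - l * norm z ^ 2" for z
    by (simp add: B_def qform_hip mat_minus_mult hip_diff_right hip_smult_right hip_self \<phi>_def)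
  have qR: "qform A (c *\<^sub>R z) = of_real (c^2) * qform A z" for c z
    by (simp add: qform_hip mv_scaleR hip_scaleR_left hip_scaleR_right power2_eq_square)
  have le: "Re (qform B z) \<le> 0" if z: "z \<in> W" for z
  proof (cases "z = 0")
    case True then show ?thesis by (simp add: qform_hip)
  next
    case False
    define c where "c = 1 / norm z"
    have c: "c > 0" using False by (simp add: c_def)
    have "c *\<^sub>R z \<in> K" using z False WR by (simp add: K_def c_def)
    then have "\<phi> (c *\<^sub>R z) \<le> l" using x1 by (simp add: l_def)
    then have "c^2 * \<phi> z \<le> l" by (simp add: \<phi>_def qR)
    moreover have "c^2 * norm z ^ 2 = 1" using False by (simp add: c_def power_divide)
    ultimately have "c^2 * \<phi> z \<le> c^2 * (l * norm z ^ 2)" by (simp add: algebra_simps)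
    then have "\<phi> z \<le> l * norm z ^ 2" using c by (simp add: mult_le_cancel_left)
    then show ?thesis using qB by simp
  qed
  have x1W: "x1 \<in> W" and nx1: "norm x1 = 1" using x1 by (auto simp: K_def)
  define y where "y = B *v x1"
  have yW: "y \<in> W"
  proof -
    have "y = A *v x1 - of_real l *s x1"
      by (simp only: y_def B_def mat_minus_mult)
    then show ?thesis using WA[OF x1W] Ws[OF x1W] Wsub by simp
  qed
  have q0: "Re (qform B x1) = 0" using qB nx1 by (simp add: l_def)
  have "2 * t * (norm y ^ 2) + t\<^sup>2 * Re (qform B y) \<le> 0" for t
  proof -
    have "x1 + t *\<^sub>R y \<in> W" using x1W yW WR Wadd by blast
    then have "Re (qform B (x1 + t *\<^sub>R y)) \<le> 0" by (rule le)
    moreover have "qform B (x1 + t *\<^sub>R y) = qform B x1 + of_real t * hip x1 (B *v y)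
        + of_real t * hip y (B *v x1) + of_real (t^2) * qform B y"
    proof -
      have e1: "B *v (x1 + t *\<^sub>R y) = B *v x1 + t *\<^sub>R (B *v y)"
        by (simp only: matrix_vector_right_distrib mv_scaleR)
      show ?thesis
        unfolding qform_hip e1
        by (simp only: hip_add_left hip_add_right hip_scaleR_left hip_scaleR_right)
          (simp add: power2_eq_square algebra_simps)
    qed
    moreover have "hip x1 (B *v y) = of_real (norm y ^ 2)"
      using hip_herm[OF hB, of x1 y] by (simp add: y_def[symmetric] hip_self)
    moreover have "hip y (B *v x1) = of_real (norm y ^ 2)"
      by (simp add: y_def[symmetric] hip_self)
    ultimately show ?thesis using q0 by simp
  qed
  then have "norm y ^ 2 = 0" by (intro real_quad_zero) auto
  then have "y = 0" by simp
  then have "A *v x1 - of_real l *s x1 = 0"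
    unfolding y_def B_def mat_minus_mult .
  then have "A *v x1 = of_real l *s x1"
    by (simp only: right_minus_eq)
  then show ?thesis using nx1 x1W unfolding W_def by blast
qed



lemma orthonormal_eigs:
  fixes A :: "complex^'n^'n"
  assumes herm: "hermitian_mat A"
  shows "k \<le> CARD('n) \<Longrightarrow> \<exists>S. finite S \<and> card S = k \<and>
     (\<forall>v\<in>S. norm v = 1 \<and> (\<exists>l::real. A *v v = of_real l *s v)) \<and>
     (\<forall>v\<in>S. \<forall>w\<in>S. v \<noteq> w \<longrightarrow> hip v w = 0)"
proof (induction k)
  case 0
  show ?case by (intro exI[of _ "{}"]) auto
next
  case (Suc k)
  then obtain S where S: "finite S" "card S = k"
     "\<forall>v\<in>S. norm v = 1 \<and> (\<exists>l::real. A *v v = of_real l *s v)"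
     "\<forall>v\<in>S. \<forall>w\<in>S. v \<noteq> w \<longrightarrow> hip v w = 0" by auto
  have "card S < CARD('n)" using Suc.prems S(2) by simp
  then obtain x and l :: real where x: "norm x = 1" "\<forall>v\<in>S. hip v x = 0" "A *v x = of_real l *s x"
    using eigvec_step[OF herm S(1)] S(3) by blast
  have xS: "x \<notin> S"
  proof
    assume "x \<in> S" then have "hip x x = 0" using x(2) by blast
    then have "x = 0" by (simp add: hip_self_eq0)
    then show False using x(1) by simp
  qed
  have sym: "hip x v = 0" if "v \<in> S" for v
    using x(2) that hip_cnj[of v x] by simp
  show ?case
    apply (intro exI[of _ "insert x S"])
    using S x xS sym by auto
qed

lemma spectral:
  fixes A :: "complex^'n^'n"
  assumes herm: "hermitian_mat A"
  shows "\<exists>U d. unitary_mat U \<and> (\<forall>i. d i \<in> \<real>) \<and> A = U ** diag_mat d ** cadj U"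
proof -
  obtain S where S: "finite S" "card S = CARD('n)"
     "\<forall>v\<in>S. norm v = 1 \<and> (\<exists>l::real. A *v v = of_real l *s v)"
     "\<forall>v\<in>S. \<forall>w\<in>S. v \<noteq> w \<longrightarrow> hip v w = 0"
    using orthonormal_eigs[OF herm, of "CARD('n)"] by auto
  obtain h :: "'n \<Rightarrow> complex^'n" where h: "bij_betw h UNIV S"
    using finite_same_card_bij[of "UNIV::'n set" S] S(1,2) by auto
  have hS: "h j \<in> S" for j using h by (auto simp: bij_betw_def)
  have hinj: "h i = h j \<Longrightarrow> i = j" for i j using h by (auto simp: bij_betw_def inj_def)
  define lam where "lam v = (SOME l::real. A *v v = of_real l *s v)" for v
  have lam: "A *v h j = of_real (lam (h j)) *s h j" for j
  proof -
    have "\<exists>l::real. A *v h j = of_real l *s h j" using S(3) hS[of j] by blast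
    then show ?thesis unfolding lam_def by (rule someI_ex)
  qed
  define U :: "complex^'n^'n" where "U = (\<chi> i j. h j $ i)"
  define d where "d j = complex_of_real (lam (h j))" for j
  have UU: "cadj U ** U = mat 1"
  proof -
    have "(cadj U ** U) $ i $ j = hip (h i) (h j)" for i j
      by (simp add: cadj_def U_def matrix_matrix_mult_def hip_def)
    moreover have "hip (h i) (h j) = (if i = j then 1 else 0)" for i j
    proof (cases "i = j")
      case True then show ?thesis using S(3) hS by (simp add: hip_self)
    next
      case False then have "h i \<noteq> h j" using hinj by blast
      moreover have "\<forall>w\<in>S. h i \<noteq> w \<longrightarrow> hip (h i) w = 0" using S(4) hS[of i] by simp
      ultimately have "hip (h i) (h j) = 0" using hS[of j] by simp
      then show ?thesis using False by simp
    qed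
    ultimately show ?thesis by (simp add: vec_eq_iff mat_def)
  qed
  then have UU2: "U ** cadj U = mat 1" using matrix_left_right_inverse by blast
  have AU: "A ** U = U ** diag_mat d"
  proof -
    have "(A ** U) $ i $ j = (A *v h j) $ i" for i j
      by (simp add: U_def matrix_matrix_mult_def matrix_vector_mult_def)
    moreover have "(U ** diag_mat d) $ i $ j = h j $ i * d j" for i j
    proof -
      have "(U ** diag_mat d) $ i $ j = (\<Sum>k\<in>UNIV. if k = j then h j $ i * d j else 0)"
        unfolding matrix_matrix_mult_def diag_mat_def U_def vec_lambda_beta by (intro sum.cong) auto
      then show ?thesis by simp
    qed
    ultimately show ?thesis using lam by (simp add: vec_eq_iff d_def mult.commute)
  qed
  have "A = A ** (U ** cadj U)" using UU2 by (simp add: matrix_mul_rid)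
  also have "\<dots> = U ** diag_mat d ** cadj U" by (simp add: matrix_mul_assoc AU)
  finally have "A = U ** diag_mat d ** cadj U" .
  moreover have "unitary_mat U" using UU UU2 by (simp add: unitary_mat_def)
  moreover have "\<forall>i. d i \<in> \<real>" by (simp add: d_def)
  ultimately show ?thesis by (intro exI[of _ U] exI[of _ d]) simp
qed



lemma det_decomp:
  assumes "unitary_mat U"
  shows "det (U ** diag_mat e ** cadj U) = prod e UNIV"
proof -
  have "det (diag_mat e) = prod e UNIV"
    by (subst det_diagonal) (auto simp: diag_mat_def)
  moreover have "det U * det (cadj U) = 1"
    using assms by (metis det_I det_mul unitary_mat_def)
  ultimately show ?thesis
    by (simp add: det_mul algebra_simps)
qed

lemma diag_mult_vec: "(diag_mat e *v x) $ k = e k * x $ k"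
proof -
  have "(\<Sum>j\<in>UNIV. (if k = j then e k else 0) * x$j) = (\<Sum>j\<in>UNIV. if k = j then e k * x$j else 0)"
    by (intro sum.cong) auto
  then show ?thesis by (simp add: matrix_vector_mult_def diag_mat_def)
qed

lemma qform_diag: "qform (diag_mat e) x = (\<Sum>k\<in>UNIV. e k * of_real (norm (x $ k) ^ 2))"
proof -
  have c: "cnj (x$k) * (e k * x$k) = e k * of_real (norm (x $ k) ^ 2)" for k
  proof -
    have "cnj (x$k) * (e k * x$k) = e k * (cnj (x$k) * x$k)" by (simp only: mult.left_commute)
    also have "cnj (x$k) * x$k = of_real (norm (x $ k) ^ 2)"
      by (subst complex_norm_square) (rule mult.commute)
    finally show ?thesis .
  qed
  show ?thesis unfolding qform_def diag_mult_vec c ..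
qed

lemma qform_axis: "qform (diag_mat e) (axis i 1) = e i"
proof -
  have "(\<Sum>k\<in>UNIV. e k * of_real (norm (axis i (1::complex) $ k) ^ 2)) = (\<Sum>k\<in>UNIV. if k = i then e i else 0)"
    by (intro sum.cong) (auto simp: axis_def)
  then show ?thesis by (simp add: qform_diag)
qed

lemma qform_decomp:
  assumes "unitary_mat U"
  shows "qform (U ** D ** cadj U) z = qform D (cadj U *v z)"
  using qform_mult[of D "cadj U" z] by simp

lemma qform_decomp_axis:
  assumes "unitary_mat U"
  shows "qform (U ** diag_mat e ** cadj U) (U *v axis i 1) = e i"
proof -
  have "cadj U *v (U *v axis i 1) = axis i 1"
    using assms by (simp add: matrix_vector_mul_assoc unitary_mat_def)
  then show ?thesis using qform_decomp[OF assms] qform_axis by simp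
qed

lemma unitary_axis_norm:
  assumes "unitary_mat U"
  shows "hip (U *v axis i 1) (U *v axis i 1) = 1"
proof -
  have "hip (U *v axis i 1) (U *v axis i 1) = hip (axis i 1) (cadj U *v (U *v axis i 1))"
    by (rule hip_adj')
  also have "\<dots> = hip (axis i 1) (axis i 1)"
    using assms by (simp add: matrix_vector_mul_assoc unitary_mat_def)
  also have "\<dots> = 1"
  proof -
    have "(\<Sum>k\<in>UNIV. cnj (axis i (1::complex) $ k) * axis i 1 $ k) = (\<Sum>k\<in>UNIV. if k = i then 1 else 0)"
      by (intro sum.cong) (auto simp: axis_def)
    then show ?thesis by (simp add: hip_def)
  qed
  finally show ?thesis .
qed

lemma unitary_axis_nz:
  assumes "unitary_mat U"
  shows "U *v axis i 1 \<noteq> 0"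
  using unitary_axis_norm[OF assms, of i] by auto

lemma qform_mat: "qform (mat c) x = c * hip x x"
  by (simp add: qform_hip mat_mult_vec hip_smult_right)

lemma qform_diff: "qform (A - B) x = qform A x - qform B x"
  by (simp add: qform_hip matrix_vector_mult_diff_rdistrib hip_diff_right)

lemma qform_add: "qform (A + B) x = qform A x + qform B x"
  by (simp add: qform_hip matrix_vector_mult_add_rdistrib hip_add_right)

lemma decomp_eig_bounds:
  fixes X :: "complex^'n^'n"
  assumes U: "unitary_mat U" and X: "X = U ** diag_mat d ** cadj U" and dR: "\<forall>i. d i \<in> \<real>"
  shows "pd_mat X \<Longrightarrow> 0 < Re (d i)"
    and "loewner_le (mat (of_real m)) X \<Longrightarrow> m \<le> Re (d i)"
    and "loewner_le X (mat (of_real M)) \<Longrightarrow> Re (d i) \<le> M"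
proof -
  let ?w = "U *v axis i 1"
  have qw: "qform X ?w = d i" using qform_decomp_axis[OF U] X by simp
  have hw: "hip ?w ?w = 1" by (rule unitary_axis_norm[OF U])
  show "pd_mat X \<Longrightarrow> 0 < Re (d i)"
    using qw unitary_axis_nz[OF U, of i] by (auto simp: pd_mat_def)
  show "loewner_le (mat (of_real m)) X \<Longrightarrow> m \<le> Re (d i)"
    using qw hw by (auto simp: loewner_le_def psd_mat_def qform_diff qform_mat dest: spec[of _ ?w])
  show "loewner_le X (mat (of_real M)) \<Longrightarrow> Re (d i) \<le> M"
    using qw hw by (auto simp: loewner_le_def psd_mat_def qform_diff qform_mat dest: spec[of _ ?w])
qed

lemma qform_decomp_nonneg:
  assumes U: "unitary_mat U" and e: "\<And>k. 0 \<le> e k"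
  shows "0 \<le> Re (qform (U ** diag_mat (\<lambda>k. of_real (e k)) ** cadj U) z)"
  using e by (simp add: qform_decomp[OF U] qform_diag Re_sum sum_nonneg)

lemma qform_decomp_pos:
  assumes U: "unitary_mat U" and e: "\<And>k. 0 < e k" and z: "z \<noteq> 0"
  shows "0 < Re (qform (U ** diag_mat (\<lambda>k. of_real (e k)) ** cadj U) z)"
proof -
  let ?w = "cadj U *v z"
  have "?w \<noteq> 0"
  proof
    assume "?w = 0"
    then have "U *v ?w = 0" by simp
    then show False using U z by (simp add: matrix_vector_mul_assoc unitary_mat_def)
  qed
  then obtain k where k: "?w $ k \<noteq> 0" by (auto simp: vec_eq_iff)
  have "0 < e k * norm (?w $ k) ^ 2" using e[of k] k by simp
  also have "\<dots> \<le> (\<Sum>j\<in>UNIV. e j * norm (?w $ j) ^ 2)"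
    by (rule member_le_sum) (auto intro!: mult_nonneg_nonneg simp: less_imp_le[OF e])
  finally show ?thesis
    by (simp add: qform_decomp[OF U] qform_diag Re_sum)
qed



lemma conv_ratio:
  fixes f :: "real \<Rightarrow> real"
  assumes "convex_on {0..} f" "f 0 = 0" "0 < x" "x \<le> y"
  shows "f x \<le> x / y * f y"
proof -
  have y: "y > 0" using assms by simp
  have "f ((1 - x/y) *\<^sub>R 0 + (x/y) *\<^sub>R y) \<le> (1 - x/y) * f 0 + (x/y) * f y"
    using assms y by (intro convex_onD[OF assms(1)]) auto
  then show ?thesis using assms y by simp
qed

lemma conc_ratio:
  fixes f :: "real \<Rightarrow> real"
  assumes "concave_on {0..} f" "f 0 = 0" "0 < x" "x \<le> y"
  shows "x / y * f y \<le> f x"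
proof -
  have y: "y > 0" using assms by simp
  have "f ((1 - x/y) *\<^sub>R 0 + (x/y) *\<^sub>R y) \<ge> (1 - x/y) * f 0 + (x/y) * f y"
    using assms y by (intro concave_onD[OF assms(1)]) auto
  then show ?thesis using assms y by simp
qed

lemma am_gm:
  fixes x :: "'n::finite \<Rightarrow> real"
  assumes pos: "\<And>i. 0 < x i"
  shows "(\<Prod>i\<in>UNIV. x i) powr (1 / real CARD('n)) \<le> (\<Sum>i\<in>UNIV. x i) / real CARD('n)"
proof -
  let ?n = "real CARD('n)"
  have n: "?n > 0" by simp
  have cv: "convex_on {0<..} (\<lambda>z::real. - ln z)"
    using ln_concave by (simp add: concave_on_def)
  have j: "- ln (\<Sum>i\<in>UNIV. (1/?n) *\<^sub>R x i) \<le> (\<Sum>i\<in>UNIV. (1/?n) * (- ln (x i)))"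
    by (rule convex_on_sum[OF _ _ cv]) (use pos in auto)
  have e1: "(\<Sum>i\<in>UNIV. (1/?n) *\<^sub>R x i) = (\<Sum>i\<in>UNIV. x i) / ?n"
    by (simp add: sum_divide_distrib)
  have e2: "(\<Sum>i\<in>UNIV. (1/?n) * (- ln (x i))) = - ((\<Sum>i\<in>UNIV. ln (x i)) / ?n)"
    by (simp add: sum_negf sum_divide_distrib flip: sum_distrib_left)
  have "- ln ((\<Sum>i\<in>UNIV. x i) / ?n) \<le> - ((\<Sum>i\<in>UNIV. ln (x i)) / ?n)"
    using j unfolding e1 e2 .
  then have "(\<Sum>i\<in>UNIV. ln (x i)) / ?n \<le> ln ((\<Sum>i\<in>UNIV. x i) / ?n)"
    by linarith
  moreover have "(\<Sum>i\<in>UNIV. ln (x i)) = ln (\<Prod>i\<in>UNIV. x i)"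
  proof -
    have "x i \<noteq> 0" for i using pos[of i] by simp
    then show ?thesis by (subst ln_prod) auto
  qed
  ultimately have "ln (\<Prod>i\<in>UNIV. x i) / ?n \<le> ln ((\<Sum>i\<in>UNIV. x i) / ?n)" by simp
  moreover have pp: "(\<Prod>i\<in>UNIV. x i) > 0" using pos by (simp add: prod_pos)
  moreover have "(\<Sum>i\<in>UNIV. x i) / ?n > 0" using pos by (simp add: sum_pos)
  ultimately show ?thesis
    by (simp add: powr_def) (metis exp_ln exp_le_cancel_iff mult.commute divide_inverse)
qed

lemma geo_superadd:
  fixes e :: "'n::finite \<Rightarrow> real"
  assumes nn: "\<And>i. 0 \<le> e i"
  shows "1 + (\<Prod>i\<in>UNIV. e i) powr (1 / real CARD('n)) \<le> (\<Prod>i\<in>UNIV. 1 + e i) powr (1 / real CARD('n))"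
proof (cases "\<exists>i. e i = 0")
  case True
  then have z: "prod e UNIV = 0" by (simp add: prod_zero_iff)
  have "(\<Prod>i\<in>UNIV. 1 + e i) \<ge> 1" using nn by (intro prod_ge_1) auto
  then have "1 \<le> (\<Prod>i\<in>UNIV. 1 + e i) powr (1 / real CARD('n))"
    by (rule ge_one_powr_ge_zero) simp
  then show ?thesis unfolding z by simp
next
  case False
  then have pos: "0 < e i" for i using nn[of i] by fastforce
  let ?r = "1 / real CARD('n)"
  define P where "P = (\<Prod>i\<in>UNIV. 1 + e i)"
  have P: "P > 0" unfolding P_def using nn by (intro prod_pos) (auto intro: add_pos_nonneg)
  have g1: "(\<Prod>i\<in>UNIV. 1 / (1 + e i)) powr ?r \<le> (\<Sum>i\<in>UNIV. 1 / (1 + e i)) / real CARD('n)"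
    by (rule am_gm) (use nn in \<open>auto intro: add_pos_nonneg\<close>)
  have g2: "(\<Prod>i\<in>UNIV. e i / (1 + e i)) powr ?r \<le> (\<Sum>i\<in>UNIV. e i / (1 + e i)) / real CARD('n)"
    by (rule am_gm, rule divide_pos_pos[OF pos]) (simp add: add_pos_nonneg nn)
  have s: "(\<Sum>i\<in>UNIV. 1 / (1 + e i)) + (\<Sum>i\<in>UNIV. e i / (1 + e i)) = real CARD('n)"
  proof -
    have ne: "1 + e i \<noteq> 0" for i using nn[of i] by linarith
    have "(\<Sum>i\<in>UNIV. 1 / (1 + e i)) + (\<Sum>i\<in>UNIV. e i / (1 + e i))
        = (\<Sum>i\<in>UNIV. 1 / (1 + e i) + e i / (1 + e i))"
      by (simp add: sum.distrib)
    also have "\<dots> = (\<Sum>i\<in>(UNIV::'n set). (1::real))"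
      by (rule sum.cong) (auto simp: ne simp flip: add_divide_distrib)
    finally have "(\<Sum>i\<in>UNIV. 1 / (1 + e i)) + (\<Sum>i\<in>UNIV. e i / (1 + e i)) = (\<Sum>i\<in>(UNIV::'n set). (1::real))" .
    then show ?thesis by simp
  qed
  have p1: "(\<Prod>i\<in>UNIV. 1 / (1 + e i)) = 1 / P"
    unfolding P_def by (simp add: prod_dividef)
  have p2: "(\<Prod>i\<in>UNIV. e i / (1 + e i)) = (\<Prod>i\<in>UNIV. e i) / P"
    unfolding P_def by (simp add: prod_dividef)
  have "(1 / P) powr ?r + ((\<Prod>i\<in>UNIV. e i) / P) powr ?r \<le> 1"
  proof -
    have "(\<Sum>i\<in>UNIV. 1 / (1 + e i)) / real CARD('n) + (\<Sum>i\<in>UNIV. e i / (1 + e i)) / real CARD('n) = 1"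
      using s by (simp flip: add_divide_distrib)
    then show ?thesis using g1 g2 unfolding p1 p2 by linarith
  qed
  moreover have "(1 / P) powr ?r = 1 / P powr ?r" using P by (simp add: powr_divide)
  moreover have "((\<Prod>i\<in>UNIV. e i) / P) powr ?r = (\<Prod>i\<in>UNIV. e i) powr ?r / P powr ?r"
    using P nn by (simp add: powr_divide prod_nonneg)
  ultimately have "(1 + (\<Prod>i\<in>UNIV. e i) powr ?r) / P powr ?r \<le> 1"
    by (simp add: add_divide_distrib)
  then show ?thesis using P unfolding P_def[symmetric] by (simp add: divide_le_eq)
qed

lemma G_scale:
  fixes p :: "'n::finite \<Rightarrow> real"
  assumes c: "0 \<le> c" and p: "\<And>i. 0 \<le> p i"
  shows "(\<Prod>i\<in>UNIV. c * p i) powr (1 / real CARD('n)) = c * (\<Prod>i\<in>UNIV. p i) powr (1 / real CARD('n))"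
proof (cases "c = 0")
  case True then show ?thesis by simp
next
  case False
  then have c: "c > 0" using c by simp
  have "(\<Prod>i\<in>UNIV. c * p i) = c ^ CARD('n) * (\<Prod>i\<in>UNIV. p i)"
    by (simp add: prod.distrib)
  moreover have "(c ^ CARD('n)) powr (1 / real CARD('n)) = c"
    using c by (simp add: powr_powr flip: powr_realpow)
  ultimately show ?thesis
    using c p by (simp add: powr_mult prod_nonneg)
qed



lemma matrix_add_rdistrib': "(A + B) ** (C::complex^'n^'n) = A ** C + B ** C"
  by (simp add: matrix_matrix_mult_def vec_eq_iff distrib_right sum.distrib)

lemma diag_mult: "diag_mat p ** (diag_mat q ** R) = diag_mat (\<lambda>i. p i * q i) ** R"
proof -
  have "diag_mat p ** diag_mat q = diag_mat (\<lambda>i. p i * q i)"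
  proof -
    have "(\<Sum>k\<in>UNIV. (if i = k then p i else 0) * (if k = j then q k else 0)) =
          (if i = j then p i * q i else 0)" for i j
    proof -
      have "(\<Sum>k\<in>UNIV. (if i = k then p i else 0) * (if k = j then q k else 0)) =
            (\<Sum>k\<in>UNIV. if k = i then (if i = j then p i * q i else 0) else 0)"
        by (intro sum.cong) auto
      then show ?thesis by simp
    qed
    then show ?thesis by (simp add: matrix_matrix_mult_def diag_mat_def vec_eq_iff)
  qed
  then show ?thesis by (simp add: matrix_mul_assoc)
qed

lemma diag_one: "diag_mat (\<lambda>_. 1) = mat 1"
  by (simp add: diag_mat_def mat_def vec_eq_iff)

lemma unit_l: "unitary_mat U \<Longrightarrow> U ** (cadj U ** R) = R"
  by (simp add: matrix_mul_assoc unitary_mat_def)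
lemma unit_r: "unitary_mat U \<Longrightarrow> cadj U ** (U ** R) = R"
  by (simp add: matrix_mul_assoc unitary_mat_def)

lemma herm_decomp:
  "hermitian_mat (U ** diag_mat (\<lambda>i. complex_of_real (e i)) ** cadj U)"
  by (simp add: hermitian_mat_def cadj_mult cadj_diag matrix_mul_assoc)

lemma det_root_decomp:
  fixes U :: "complex^'n^'n"
  assumes "unitary_mat U"
  shows "det_root (U ** diag_mat (\<lambda>i. complex_of_real (a i)) ** cadj U)
     = (\<Prod>i\<in>UNIV. a i) powr (1 / real CARD('n))"
  using det_decomp[OF assms] by (simp add: det_root_def flip: of_real_prod)

lemma minkowski:
  fixes X Y :: "complex^'n^'n"
  assumes U: "unitary_mat U" and a: "\<And>i. 0 < a i"
    and X: "X = U ** diag_mat (\<lambda>i. complex_of_real (a i)) ** cadj U"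
    and hY: "hermitian_mat Y" and pY: "\<And>z. 0 \<le> Re (qform Y z)"
  shows "det_root X + det_root Y \<le> det_root (X + Y)"
proof -
  define s where "s i = complex_of_real (sqrt (a i))" for i
  define si where "si i = complex_of_real (1 / sqrt (a i))" for i
  define S where "S = U ** diag_mat s"
  define T where "T = diag_mat si ** cadj U"
  have a0: "a i \<noteq> 0" for i using a[of i] by simp
  have sq: "sqrt (a i) * (1 / sqrt (a i)) = 1" "(1 / sqrt (a i)) * sqrt (a i) = 1" for i
    using a[of i] by simp_all
  have sq2: "sqrt (a i) * sqrt (a i) = a i" for i
    using a[of i] by simp
  have ssi: "(\<lambda>i. s i * si i) = (\<lambda>_. 1)" "(\<lambda>i. si i * s i) = (\<lambda>_. 1)"
    unfolding s_def si_def fun_eq_iff of_real_mult[symmetric] sq by simp_all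
  have ss: "(\<lambda>i. s i * s i) = (\<lambda>i. complex_of_real (a i))"
    unfolding s_def fun_eq_iff of_real_mult[symmetric] sq2 by simp
  have cs: "cadj (diag_mat s) = diag_mat s"
  proof -
    have "(\<lambda>i. cnj (s i)) = s" by (simp add: fun_eq_iff s_def)
    then show ?thesis by (simp add: cadj_diag)
  qed
  have ST: "S ** T = mat 1"
  proof -
    have "S ** T = U ** (diag_mat s ** (diag_mat si ** cadj U))"
      by (simp add: S_def T_def matrix_mul_assoc)
    also have "\<dots> = U ** cadj U" by (simp add: diag_mult ssi diag_one)
    also have "\<dots> = mat 1" using U by (simp add: unitary_mat_def)
    finally show ?thesis .
  qed
  have STR: "S ** (T ** R) = R" for R
    using ST by (simp add: matrix_mul_assoc)
  have cTS: "cadj T ** cadj S = mat 1"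
  proof -
    have "cadj (S ** T) = cadj T ** cadj S" by (rule cadj_mult)
    then show ?thesis using ST by simp
  qed
  have SS: "S ** cadj S = X"
  proof -
    have "S ** cadj S = U ** (diag_mat s ** (diag_mat s ** cadj U))"
      by (simp add: S_def cadj_mult cs matrix_mul_assoc)
    also have "\<dots> = U ** (diag_mat (\<lambda>i. s i * s i) ** cadj U)" by (simp only: diag_mult)
    also have "\<dots> = X" by (simp only: ss X matrix_mul_assoc)
    finally show ?thesis .
  qed
  define C where "C = T ** Y ** cadj T"
  have hC: "hermitian_mat C"
  proof -
    have "cadj C = cadj (cadj T) ** cadj (T ** Y)" unfolding C_def by (rule cadj_mult)
    also have "\<dots> = T ** (cadj Y ** cadj T)" by (simp only: cadj_cadj cadj_mult)
    also have "\<dots> = C" using hY by (simp only: hermitian_mat_def C_def matrix_mul_assoc)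
    finally show ?thesis by (simp only: hermitian_mat_def)
  qed
  have YC: "S ** C ** cadj S = Y"
  proof -
    have "S ** C ** cadj S = S ** (T ** (Y ** (cadj T ** cadj S)))"
      by (simp add: C_def matrix_mul_assoc)
    also have "\<dots> = Y" by (simp add: STR cTS)
    finally show ?thesis .
  qed
  have XY: "X + Y = S ** (mat 1 + C) ** cadj S"
    by (simp add: matrix_add_ldistrib matrix_add_rdistrib' SS YC)
  obtain V e where V: "unitary_mat V" and eR: "\<forall>i. e i \<in> \<real>" and C: "C = V ** diag_mat e ** cadj V"
    using spectral[OF hC] by blast
  define r where "r k = Re (e k)" for k
  have er: "e k = complex_of_real (r k)" for k
    using eR by (simp add: r_def)
  have r0: "0 \<le> r k" for k
  proof -
    have "qform C (V *v axis k 1) = e k" using qform_decomp_axis[OF V] C by simp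
    moreover have "qform Y (cadj T *v (V *v axis k 1)) = qform C (V *v axis k 1)"
      using qform_mult[of Y "cadj T" "V *v axis k 1"] by (simp add: C_def)
    ultimately show ?thesis using pY[of "cadj T *v (V *v axis k 1)"] by (simp add: r_def)
  qed
  have IC: "mat 1 + C = V ** diag_mat (\<lambda>k. complex_of_real (1 + r k)) ** cadj V"
  proof -
    have "diag_mat (\<lambda>k. complex_of_real (1 + r k)) = mat 1 + diag_mat e"
      by (simp add: diag_mat_def mat_def vec_eq_iff er)
    then show ?thesis
      using V by (simp add: C matrix_add_ldistrib matrix_add_rdistrib' unitary_mat_def)
  qed
  have Ce: "C = V ** diag_mat (\<lambda>k. complex_of_real (r k)) ** cadj V"
  proof -
    have "e = (\<lambda>k. complex_of_real (r k))" using er by (simp add: fun_eq_iff)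
    then show ?thesis using C by simp
  qed
  define g where "g = (\<Prod>i\<in>UNIV. a i)"
  have g: "g > 0" unfolding g_def using a by (simp add: prod_pos)
  have dX: "det X = of_real g"
    using det_decomp[OF U] X by (simp add: g_def flip: of_real_prod)
  have dSS: "det S * det (cadj S) = of_real g"
    using dX SS det_mul[of S "cadj S"] by simp
  have dY: "det Y = of_real g * of_real (\<Prod>k\<in>UNIV. r k)"
  proof -
    have "det Y = det (S ** C ** cadj S)" using YC by simp
    also have "\<dots> = det S * det C * det (cadj S)" by (simp only: det_mul)
    also have "det C = of_real (\<Prod>k\<in>UNIV. r k)"
      using det_decomp[OF V] Ce by (simp flip: of_real_prod)
    finally show ?thesis using dSS by (simp add: algebra_simps)
  qed
  have dXY: "det (X + Y) = of_real g * of_real (\<Prod>k\<in>UNIV. 1 + r k)"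
  proof -
    have "det (X + Y) = det (S ** (mat 1 + C) ** cadj S)" using XY by simp
    also have "\<dots> = det S * det (mat 1 + C) * det (cadj S)" by (simp only: det_mul)
    also have "det (mat 1 + C) = of_real (\<Prod>k\<in>UNIV. 1 + r k)"
    proof -
      have "det (mat 1 + C) = (\<Prod>k\<in>UNIV. complex_of_real (1 + r k))"
        unfolding IC by (rule det_decomp[OF V])
      then show ?thesis by (simp only: of_real_prod)
    qed
    finally show ?thesis using dSS by (simp add: algebra_simps)
  qed
  let ?p = "1 / real CARD('n)"
  have pr: "0 \<le> (\<Prod>k\<in>UNIV. r k)" using r0 by (simp add: prod_nonneg)
  have pr1: "0 \<le> (\<Prod>k\<in>UNIV. 1 + r k)" using r0 by (simp add: prod_nonneg add_nonneg_nonneg)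
  have "det_root X + det_root Y = g powr ?p * (1 + (\<Prod>k\<in>UNIV. r k) powr ?p)"
    using g pr by (simp add: det_root_def dX dY powr_mult algebra_simps flip: of_real_mult of_real_prod)
  also have "\<dots> \<le> g powr ?p * (\<Prod>k\<in>UNIV. 1 + r k) powr ?p"
    by (intro mult_left_mono geo_superadd r0) simp
  also have "\<dots> = det_root (X + Y)"
    using g pr1 by (simp add: det_root_def dXY powr_mult flip: of_real_mult of_real_prod)
  finally show ?thesis .
qed



lemma det_root_nonneg: "0 \<le> det_root X"
  by (simp add: det_root_def)

lemma dr_upper:
  fixes U :: "complex^'n^'n"
  assumes U: "unitary_mat U" and c: "0 \<le> c" and a: "\<And>i. 0 < a i"
    and fa: "\<And>i. 0 \<le> fa i \<and> fa i \<le> c * a i"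
  shows "det_root (U ** diag_mat (\<lambda>i. complex_of_real (fa i)) ** cadj U)
       \<le> c * det_root (U ** diag_mat (\<lambda>i. complex_of_real (a i)) ** cadj U)"
proof -
  have "(\<Prod>i\<in>UNIV. fa i) \<le> (\<Prod>i\<in>UNIV. c * a i)"
    using fa by (intro prod_mono) auto
  then have "(\<Prod>i\<in>UNIV. fa i) powr (1 / real CARD('n)) \<le> (\<Prod>i\<in>UNIV. c * a i) powr (1 / real CARD('n))"
    using fa by (intro powr_mono2) (auto intro: prod_nonneg)
  also have "\<dots> = c * (\<Prod>i\<in>UNIV. a i) powr (1 / real CARD('n))"
    using c a by (intro G_scale) (auto intro: less_imp_le)
  finally show ?thesis using det_root_decomp[OF U, of fa] det_root_decomp[OF U, of a] by simp
qed

lemma dr_lower: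
  fixes U :: "complex^'n^'n"
  assumes U: "unitary_mat U" and c: "0 \<le> c" and a: "\<And>i. 0 < a i"
    and fa: "\<And>i. c * a i \<le> fa i"
  shows "c * det_root (U ** diag_mat (\<lambda>i. complex_of_real (a i)) ** cadj U)
       \<le> det_root (U ** diag_mat (\<lambda>i. complex_of_real (fa i)) ** cadj U)"
proof -
  have ca: "0 \<le> c * a i" for i using c a[of i] by simp
  have "c * (\<Prod>i\<in>UNIV. a i) powr (1 / real CARD('n)) = (\<Prod>i\<in>UNIV. c * a i) powr (1 / real CARD('n))"
    using c a by (intro G_scale[symmetric]) (auto intro: less_imp_le)
  also have "\<dots> \<le> (\<Prod>i\<in>UNIV. fa i) powr (1 / real CARD('n))"
    using fa ca by (intro powr_mono2 prod_mono) (auto intro: prod_nonneg)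
  finally show ?thesis using det_root_decomp[OF U, of fa] det_root_decomp[OF U, of a] by simp
qed

lemma pd_psd: "pd_mat A \<Longrightarrow> 0 \<le> Re (qform A z)"
  by (cases "z = 0") (auto simp: pd_mat_def qform_hip intro: less_imp_le)

lemma part_upper:
  fixes A B :: "complex^'n^'n"
  assumes U: "unitary_mat U" and V: "unitary_mat V" and c: "0 \<le> c"
    and a: "\<And>i. 0 < a i" and b: "\<And>i. 0 < b i"
    and A: "A = U ** diag_mat (\<lambda>i. complex_of_real (a i)) ** cadj U"
    and B: "B = V ** diag_mat (\<lambda>i. complex_of_real (b i)) ** cadj V"
    and fa: "\<And>i. 0 \<le> fa i \<and> fa i \<le> c * a i"
    and fb: "\<And>i. 0 \<le> fb i \<and> fb i \<le> c * b i"
  shows "det_root (U ** diag_mat (\<lambda>i. complex_of_real (fa i)) ** cadj U)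
       + det_root (V ** diag_mat (\<lambda>i. complex_of_real (fb i)) ** cadj V) \<le> c * det_root (A + B)"
proof -
  have "det_root A + det_root B \<le> det_root (A + B)"
    by (rule minkowski[OF U a A]) (simp_all add: B herm_decomp qform_decomp_nonneg[OF V] less_imp_le[OF b])
  then have "c * (det_root A + det_root B) \<le> c * det_root (A + B)"
    using c by (rule mult_left_mono)
  moreover have "det_root (U ** diag_mat (\<lambda>i. complex_of_real (fa i)) ** cadj U) \<le> c * det_root A"
    unfolding A by (rule dr_upper[OF U c a fa])
  moreover have "det_root (V ** diag_mat (\<lambda>i. complex_of_real (fb i)) ** cadj V) \<le> c * det_root B"
    unfolding B by (rule dr_upper[OF V c b fb])
  ultimately show ?thesis by (simp add: algebra_simps)
qed

lemma part_lower:
  fixes A B :: "complex^'n^'n"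
  assumes U: "unitary_mat U" and V: "unitary_mat V" and c: "0 \<le> c"
    and a: "\<And>i. 0 < a i" and b: "\<And>i. 0 < b i"
    and A: "A = U ** diag_mat (\<lambda>i. complex_of_real (a i)) ** cadj U"
    and B: "B = V ** diag_mat (\<lambda>i. complex_of_real (b i)) ** cadj V"
    and fa: "\<And>i. c * a i \<le> fa i"
    and fb: "\<And>i. c * b i \<le> fb i"
  shows "c * (det_root A + det_root B) \<le>
     det_root (U ** diag_mat (\<lambda>i. complex_of_real (fa i)) ** cadj U
       + V ** diag_mat (\<lambda>i. complex_of_real (fb i)) ** cadj V)"
proof (cases "c = 0")
  case True then show ?thesis by (simp add: det_root_nonneg)
next
  case False
  then have c': "0 < c" using c by simp
  have fap: "0 < fa i" for i using fa[of i] mult_pos_pos[OF c' a[of i]] by linarith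
  have fbp: "0 \<le> fb i" for i using fb[of i] mult_pos_pos[OF c' b[of i]] by linarith
  have "c * det_root A \<le> det_root (U ** diag_mat (\<lambda>i. complex_of_real (fa i)) ** cadj U)"
    unfolding A by (rule dr_lower[OF U c a fa])
  moreover have "c * det_root B \<le> det_root (V ** diag_mat (\<lambda>i. complex_of_real (fb i)) ** cadj V)"
    unfolding B by (rule dr_lower[OF V c b fb])
  moreover have "det_root (U ** diag_mat (\<lambda>i. complex_of_real (fa i)) ** cadj U)
      + det_root (V ** diag_mat (\<lambda>i. complex_of_real (fb i)) ** cadj V) \<le>
     det_root (U ** diag_mat (\<lambda>i. complex_of_real (fa i)) ** cadj U
       + V ** diag_mat (\<lambda>i. complex_of_real (fb i)) ** cadj V)"
    by (rule minkowski[OF U fap refl]) (simp_all add: herm_decomp qform_decomp_nonneg[OF V] fbp)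
  ultimately show ?thesis by (simp add: algebra_simps)
qed

lemma decomp_of:
  fixes A :: "complex^'n^'n"
  assumes pd: "pd_mat A" and lo: "loewner_le (mat (complex_of_real m)) A"
    and hi: "loewner_le A (mat (complex_of_real M))"
  obtains U a where "unitary_mat U" "\<And>i. m \<le> a i \<and> a i \<le> M \<and> 0 < a i"
    "A = U ** diag_mat (\<lambda>i. complex_of_real (a i)) ** cadj U"
    "\<And>f. mat_fun f A = U ** diag_mat (\<lambda>i. complex_of_real (f (a i))) ** cadj U"
proof -
  define P where "P = (\<lambda>(U, d). unitary_mat U \<and> (\<forall>i. d i \<in> \<real>) \<and> A = U ** diag_mat d ** cadj (U::complex^'n^'n))"
  have herm: "hermitian_mat A" using pd by (simp add: pd_mat_def)
  have "\<exists>p. P p" using spectral[OF herm] by (auto simp: P_def)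
  then have "P (SOME p. P p)" by (rule someI_ex)
  moreover obtain U d where Ud: "(SOME p. P p) = (U, d)" by (cases "SOME p. P p") auto
  ultimately have U: "unitary_mat U" and dR: "\<forall>i. d i \<in> \<real>" and A: "A = U ** diag_mat d ** cadj U"
    by (auto simp: P_def)
  define a where "a i = Re (d i)" for i
  have d: "d = (\<lambda>i. complex_of_real (a i))" using dR by (auto simp: a_def fun_eq_iff)
  have mf: "mat_fun f A = U ** diag_mat (\<lambda>i. complex_of_real (f (a i))) ** cadj U" for f
  proof -
    have "mat_fun f A = (case (SOME p. P p) of (U, d) \<Rightarrow> U ** diag_mat (\<lambda>i. complex_of_real (f (Re (d i)))) ** cadj U)"
      unfolding mat_fun_def P_def by simp
    then show ?thesis using Ud by (simp add: a_def)
  qed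
  have "m \<le> a i \<and> a i \<le> M \<and> 0 < a i" for i
    using decomp_eig_bounds[OF U A dR] pd lo hi by (simp add: a_def)
  then show ?thesis using that U A d mf by blast
qed



lemma r_a: fixes p q x y :: real
  assumes "0 < x" "0 < y" "p \<le> x / y * q" shows "p / x * y \<le> q"
proof -
  have "p * y \<le> x * q" using assms by (simp add: field_simps)
  then show ?thesis using assms by (simp add: field_simps mult.commute)
qed

lemma r_b: fixes p q x y :: real
  assumes "0 < x" "0 < y" "x / y * q \<le> p" shows "q \<le> p / x * y"
proof -
  have "x * q \<le> p * y" using assms by (simp add: field_simps)
  then show ?thesis using assms by (simp add: field_simps mult.commute)
qed

lemma r_c: fixes p q x y :: real
  assumes "p \<le> x / y * q" shows "p \<le> q / y * x"
  using assms by (simp add: mult.commute)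

lemma r_d: fixes p q x y :: real
  assumes "x / y * q \<le> p" shows "q / y * x \<le> p"
  using assms by (simp add: mult.commute)

theorem theorem3p2:
  fixes m M :: real and A B :: "complex^'n^'n"
  assumes "0 < m" and "m < M"
    and "pd_mat A" and "pd_mat B"
    and "loewner_le (mat (complex_of_real m)) A" and "loewner_le A (mat (complex_of_real M))"
    and "loewner_le (mat (complex_of_real m)) B" and "loewner_le B (mat (complex_of_real M))"
  shows "(\<forall>f :: real \<Rightarrow> real.
            (\<forall>x\<ge>0. 0 \<le> f x) \<and> f differentiable_on {0..} \<and> convex_on {0..} f \<and> f 0 = 0 \<longrightarrow>
              det_root (mat_fun f A) + det_root (mat_fun f B) \<le> f M / M * det_root (A + B) \<and>
              f m / m * (det_root A + det_root B) \<le> det_root (mat_fun f A + mat_fun f B))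
       \<and> (\<forall>f :: real \<Rightarrow> real.
            (\<forall>x\<ge>0. 0 \<le> f x) \<and> f differentiable_on {0..} \<and> concave_on {0..} f \<and> f 0 = 0 \<longrightarrow>
              det_root (mat_fun f A) + det_root (mat_fun f B) \<le> f m / m * det_root (A + B) \<and>
              f M / M * (det_root A + det_root B) \<le> det_root (mat_fun f A + mat_fun f B))"
proof -
  obtain U a where U: "unitary_mat U" and ab: "\<And>i. m \<le> a i \<and> a i \<le> M \<and> 0 < a i"
    and A: "A = U ** diag_mat (\<lambda>i. complex_of_real (a i)) ** cadj U"
    and mA: "\<And>f. mat_fun f A = U ** diag_mat (\<lambda>i. complex_of_real (f (a i))) ** cadj U"
    using decomp_of[OF assms(3) assms(5) assms(6)] by metis
  obtain V b where V: "unitary_mat V" and bb: "\<And>i. m \<le> b i \<and> b i \<le> M \<and> 0 < b i"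
    and B: "B = V ** diag_mat (\<lambda>i. complex_of_real (b i)) ** cadj V"
    and mB: "\<And>f. mat_fun f B = V ** diag_mat (\<lambda>i. complex_of_real (f (b i))) ** cadj V"
    using decomp_of[OF assms(4) assms(7) assms(8)] by metis
  have m: "0 < m" and M: "0 < M" using assms(1,2) by auto
  have a: "\<And>i. 0 < a i" and b: "\<And>i. 0 < b i" using ab bb by auto
  show ?thesis
  proof (intro conjI allI impI)
    fix f :: "real \<Rightarrow> real"
    assume H: "(\<forall>x\<ge>0. 0 \<le> f x) \<and> f differentiable_on {0..} \<and> convex_on {0..} f \<and> f 0 = 0"
    then have nn: "\<And>x. 0 \<le> x \<Longrightarrow> 0 \<le> f x" and cv: "convex_on {0..} f" and f0: "f 0 = 0" by auto
    have fa: "0 \<le> f (a i) \<and> f (a i) \<le> f M / M * a i" for i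
      using nn[of "a i"] a[of i] r_c[OF conv_ratio[OF cv f0 a[of i]]] ab[of i] by auto
    have fb: "0 \<le> f (b i) \<and> f (b i) \<le> f M / M * b i" for i
      using nn[of "b i"] b[of i] r_c[OF conv_ratio[OF cv f0 b[of i]]] bb[of i] by auto
    have cM: "0 \<le> f M / M" using nn[of M] M by simp
    show "det_root (mat_fun f A) + det_root (mat_fun f B) \<le> f M / M * det_root (A + B)"
      unfolding mA mB by (rule part_upper[OF U V cM a b A B fa fb])
    have ga: "f m / m * a i \<le> f (a i)" for i
      using r_a[OF m a[of i] conv_ratio[OF cv f0 m]] ab[of i] by auto
    have gb: "f m / m * b i \<le> f (b i)" for i
      using r_a[OF m b[of i] conv_ratio[OF cv f0 m]] bb[of i] by auto
    have cm: "0 \<le> f m / m" using nn[of m] m by simp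
    show "f m / m * (det_root A + det_root B) \<le> det_root (mat_fun f A + mat_fun f B)"
      unfolding mA mB by (rule part_lower[OF U V cm a b A B ga gb])
  next
    fix f :: "real \<Rightarrow> real"
    assume H: "(\<forall>x\<ge>0. 0 \<le> f x) \<and> f differentiable_on {0..} \<and> concave_on {0..} f \<and> f 0 = 0"
    then have nn: "\<And>x. 0 \<le> x \<Longrightarrow> 0 \<le> f x" and cv: "concave_on {0..} f" and f0: "f 0 = 0" by auto
    have fa: "0 \<le> f (a i) \<and> f (a i) \<le> f m / m * a i" for i
      using nn[of "a i"] a[of i] r_b[OF m a[of i] conc_ratio[OF cv f0 m]] ab[of i] by auto
    have fb: "0 \<le> f (b i) \<and> f (b i) \<le> f m / m * b i" for i
      using nn[of "b i"] b[of i] r_b[OF m b[of i] conc_ratio[OF cv f0 m]] bb[of i] by auto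
    have cm: "0 \<le> f m / m" using nn[of m] m by simp
    show "det_root (mat_fun f A) + det_root (mat_fun f B) \<le> f m / m * det_root (A + B)"
      unfolding mA mB by (rule part_upper[OF U V cm a b A B fa fb])
    have ga: "f M / M * a i \<le> f (a i)" for i
      using r_d[OF conc_ratio[OF cv f0 a[of i]]] ab[of i] by auto
    have gb: "f M / M * b i \<le> f (b i)" for i
      using r_d[OF conc_ratio[OF cv f0 b[of i]]] bb[of i] by auto
    have cM: "0 \<le> f M / M" using nn[of M] M by simp
    show "f M / M * (det_root A + det_root B) \<le> det_root (mat_fun f A + mat_fun f B)"
      unfolding mA mB by (rule part_lower[OF U V cM a b A B ga gb])
  qed
qed


end
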